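(* Let $(B,+,\circ)$ be a left brace with Yang–Baxter map $r$ and let $c\in B$ be central in $(B,\circ)$. Then the map (1) $k_{1,n}(x)=c\circ x-c+n\,x$, for each $n\in\mathbb Z$, is $\mathcal G(B,r)$-equivariant. If moreover $2\,(c\circ b)=2b+2c$ for all $b\in B$, then the following maps $B\to B$ are also $\mathcal G(B,r)$-equivariant: (2) $k_{2,n}(x)=c\circ x+c+n\,x$, for each $n\in\mathbb Z$; (3) $\widetilde k_m(x)=c^{2m}\circ x+c^{2m}+2\sum_{j=1}^{m-1}c^{2j}-2\sum_{j=1}^{m}c^{2j-1}$, for each integer $m\ge1$; (4) $\widehat k_m(x)=c^{2m}\circ x-c^{2m}-2\sum_{j=1}^{m-1}c^{2j}+2\sum_{j=1}^{m}c^{2j-1}$, for each integer $m\ge1$; (5) $l_{m,n}(x)=2m\,c+(2m+n)\,x$, for each integer $m\ge1$ and $n\in\mathbb Z$.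
   Context: A (left) brace is a triple $(B,+,\circ)$ such that $(B,+)$ is an abelian group with identity $0$, $(B,\circ)$ is a group, and $x\circ(y+z)=x\circ y+x\circ z-x$ for all $x,y,z\in B$. The Yang–Baxter map is $r(x,y)=(\sigma_x(y),\tau_y(x))$ with $\sigma_x(y)=x\circ y-x$ and $\tau_y(x)=(\sigma_x(y))^{-1}\circ x-(\sigma_x(y))^{-1}$. A map $k:B\to B$ is $\mathcal G(B,r)$-equivariant if $k\sigma_x=\sigma_x k$ for all $x\in B$. Powers $c^j$ are taken in the group $(B,\circ)$; $n\,x$ for $n\in\mathbb Z$ denotes the $n$-th multiple in $(B,+)$; empty sums are $0$. *)

theory Defs
  imports "HOL-Algebra.Group"
begin

definition circ_grp :: "('a \<Rightarrow> 'a \<Rightarrow> 'a) \<Rightarrow> 'a monoid" where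
  "circ_grp circ = \<lparr>carrier = UNIV, mult = circ,
      one = (THE e. group \<lparr>carrier = UNIV, mult = circ, one = e\<rparr>)\<rparr>"

definition is_brace :: "('a::ab_group_add \<Rightarrow> 'a \<Rightarrow> 'a) \<Rightarrow> bool" where
  "is_brace circ \<longleftrightarrow>
     (\<exists>e. group \<lparr>carrier = UNIV, mult = circ, one = e\<rparr>) \<and>
     (\<forall>x y z. circ x (y + z) = circ x y + circ x z - x)"

definition brace_inv :: "('a \<Rightarrow> 'a \<Rightarrow> 'a) \<Rightarrow> 'a \<Rightarrow> 'a" where
  "brace_inv circ x = inv\<^bsub>circ_grp circ\<^esub> x"

definition brace_pow :: "('a \<Rightarrow> 'a \<Rightarrow> 'a) \<Rightarrow> 'a \<Rightarrow> nat \<Rightarrow> 'a" where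
  "brace_pow circ x j = x [^]\<^bsub>circ_grp circ\<^esub> j"

definition sigma :: "('a::ab_group_add \<Rightarrow> 'a \<Rightarrow> 'a) \<Rightarrow> 'a \<Rightarrow> 'a \<Rightarrow> 'a" where
  "sigma circ x y = circ x y - x"

definition tau :: "('a::ab_group_add \<Rightarrow> 'a \<Rightarrow> 'a) \<Rightarrow> 'a \<Rightarrow> 'a \<Rightarrow> 'a" where
  "tau circ y x = circ (brace_inv circ (sigma circ x y)) x - brace_inv circ (sigma circ x y)"

definition ybe_map :: "('a::ab_group_add \<Rightarrow> 'a \<Rightarrow> 'a) \<Rightarrow> 'a \<times> 'a \<Rightarrow> 'a \<times> 'a" where
  "ybe_map circ = (\<lambda>(x, y). (sigma circ x y, tau circ y x))"

text \<open>k is G(B,r)-equivariant: k commutes with every sigma_x.\<close>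
definition equivariant :: "('a::ab_group_add \<Rightarrow> 'a \<Rightarrow> 'a) \<Rightarrow> ('a \<Rightarrow> 'a) \<Rightarrow> bool" where
  "equivariant circ k \<longleftrightarrow> (\<forall>x. k \<circ> sigma circ x = sigma circ x \<circ> k)"

definition zsmul :: "int \<Rightarrow> 'a::ab_group_add \<Rightarrow> 'a" where
  "zsmul n x = (if 0 \<le> n then ((+) x ^^ nat n) 0 else - (((+) x ^^ nat (- n)) 0))"

end

theory Submission
  imports Defs
begin

lemma bl: assumes "is_brace circ" shows "circ x (y + z) = circ x y + circ x z - x"
  using assms unfolding is_brace_def by blast

lemma circ0: assumes "is_brace circ" shows "circ x 0 = (x::'a::ab_group_add)"
proof -
  have "circ x (0+0) = circ x 0 + circ x 0 - x" by (rule bl[OF assms])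
  thus ?thesis by (simp add: algebra_simps)
qed

lemma grp_one: assumes "is_brace circ"
  shows "(THE e. group \<lparr>carrier = UNIV, mult = circ, one = e\<rparr>) = (0::'a::ab_group_add)"
proof -
  have uq: "e = 0" if g: "group \<lparr>carrier = UNIV, mult = circ, one = e\<rparr>" for e
  proof -
    have "circ e 0 = 0" using group.is_monoid[OF g] monoid.l_one[of "\<lparr>carrier = UNIV, mult = circ, one = e\<rparr>" 0]
      by simp
    thus ?thesis using circ0[OF assms, of e] by simp
  qed
  obtain e where g: "group \<lparr>carrier = UNIV, mult = circ, one = e\<rparr>" using assms unfolding is_brace_def by blast
  with uq have "group \<lparr>carrier = UNIV, mult = circ, one = 0\<rparr>" by metis
  thus ?thesis using uq by (rule the_equality)
qed

lemma grp_eq: assumes "is_brace circ"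
  shows "circ_grp circ = \<lparr>carrier = UNIV, mult = circ, one = (0::'a::ab_group_add)\<rparr>"
  using grp_one[OF assms] unfolding circ_grp_def by simp

lemma grp: assumes "is_brace circ"
  shows "group (circ_grp (circ::'a::ab_group_add \<Rightarrow> _))"
proof -
  obtain e where g: "group \<lparr>carrier = UNIV, mult = circ, one = e\<rparr>" using assms unfolding is_brace_def by blast
  have "e = 0"
  proof -
    have "circ e 0 = 0" using group.is_monoid[OF g] monoid.l_one[of "\<lparr>carrier = UNIV, mult = circ, one = e\<rparr>" 0]
      by simp
    thus ?thesis using circ0[OF assms, of e] by simp
  qed
  thus ?thesis using g grp_eq[OF assms] by simp
qed

lemma assoc: assumes "is_brace circ"
  shows "circ (circ x y) z = circ x (circ y (z::'a::ab_group_add))"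
  using monoid.m_assoc[OF group.is_monoid[OF grp[OF assms]], of x y z] grp_eq[OF assms] by simp

lemma lone: assumes "is_brace circ" shows "circ 0 x = (x::'a::ab_group_add)"
  using monoid.l_one[OF group.is_monoid[OF grp[OF assms]], of x] grp_eq[OF assms] by simp

lemma pow0: assumes "is_brace circ" shows "brace_pow circ c 0 = (0::'a::ab_group_add)"
  unfolding brace_pow_def using grp_eq[OF assms] by simp

lemma powS: "brace_pow circ c (Suc k) = circ (brace_pow circ c k) c"
  unfolding brace_pow_def circ_grp_def by simp

lemma sig_add: assumes "is_brace circ"
  shows "sigma circ x (a + b) = sigma circ x a + sigma circ x (b::'a::ab_group_add)"
  unfolding sigma_def using bl[OF assms] by (simp add: algebra_simps)

lemma sig_0: assumes "is_brace circ" shows "sigma circ x 0 = (0::'a::ab_group_add)"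
  unfolding sigma_def using circ0[OF assms] by simp

lemma sig_neg: assumes "is_brace circ" shows "sigma circ x (- a) = - sigma circ x (a::'a::ab_group_add)"
  using sig_add[OF assms, of x a "-a"] sig_0[OF assms, of x] by (metis add.right_inverse add.inverse_unique)

lemma sig_diff: assumes "is_brace circ" shows "sigma circ x (a - b) = sigma circ x a - sigma circ x (b::'a::ab_group_add)"
  using sig_add[OF assms, of x a "-b"] sig_neg[OF assms, of x b] by simp

lemma sig_comp: assumes "is_brace circ"
  shows "sigma circ a (sigma circ b z) = sigma circ (circ a b) (z::'a::ab_group_add)"
proof -
  have "sigma circ a (sigma circ b z) = sigma circ a (circ b z) - sigma circ a b"
    unfolding sigma_def[of circ b z] by (rule sig_diff[OF assms])
  thus ?thesis unfolding sigma_def using assoc[OF assms] by simp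
qed

lemma sig_pow: assumes "is_brace circ"
  shows "sigma circ y (((+) x ^^ k) 0) = ((+) (sigma circ y x) ^^ k) (0::'a::ab_group_add)"
  by (induction k) (simp_all add: sig_0[OF assms] sig_add[OF assms])

lemma sig_zsmul: assumes "is_brace circ"
  shows "sigma circ y (zsmul n x) = zsmul n (sigma circ y (x::'a::ab_group_add))"
  unfolding zsmul_def using sig_pow[OF assms] sig_neg[OF assms] by simp

lemma zsmul2: "zsmul 2 x = x + x"
  unfolding zsmul_def by (simp add: numeral_2_eq_2)

lemma zsmul_2m: "zsmul (2 * int m) x = ((+) (x + x) ^^ m) 0"
proof -
  have "((+) x ^^ (2*m)) 0 = ((+) (x + x) ^^ m) 0"
    by (induction m) (simp_all add: algebra_simps)
  moreover have "nat (2 * int m) = 2 * m" by simp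
  ultimately show ?thesis unfolding zsmul_def by simp
qed

lemma zsmul_succ: "zsmul (n + 1) x = x + zsmul n x"
proof (cases "0 \<le> n")
  case True
  then have "nat (n+1) = Suc (nat n)" by simp
  then show ?thesis using True unfolding zsmul_def by simp
next
  case False
  show ?thesis
  proof (cases "n = -1")
    case True then show ?thesis unfolding zsmul_def by simp
  next
    case F2: False
    then have "nat (-n) = Suc (nat (-(n+1)))" "\<not> 0 \<le> n+1" using False by auto
    then show ?thesis using False unfolding zsmul_def by simp
  qed
qed

lemma zsmul0: "zsmul 0 x = 0" unfolding zsmul_def by simp

definition fixd :: "('a::ab_group_add \<Rightarrow> 'a \<Rightarrow> 'a) \<Rightarrow> 'a \<Rightarrow> bool" where
  "fixd circ a \<longleftrightarrow> (\<forall>y. sigma circ y a = a)"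

lemma fixd_add: assumes "is_brace circ" "fixd circ a" "fixd circ b" shows "fixd circ (a + b)"
  using assms unfolding fixd_def by (simp add: sig_add[OF assms(1)])
lemma fixd_diff: assumes "is_brace circ" "fixd circ a" "fixd circ b" shows "fixd circ (a - b)"
  using assms unfolding fixd_def by (simp add: sig_diff[OF assms(1)])
lemma fixd_0: assumes "is_brace circ" shows "fixd circ 0"
  unfolding fixd_def by (simp add: sig_0[OF assms(1)])
lemma fixd_sum: assumes "is_brace circ" "\<And>j. j \<in> S \<Longrightarrow> fixd circ (f j)" shows "fixd circ (sum f S)"
  using assms(2)
proof (induction S rule: infinite_finite_induct)
  case (infinite A) then show ?case using fixd_0[OF assms(1)] by simp
next
  case empty then show ?case using fixd_0[OF assms(1)] by simp
next
  case (insert x F) then show ?case using fixd_add[OF assms(1)] by simp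
qed
lemma fixd_pow: assumes "is_brace circ" "fixd circ a" shows "fixd circ (((+) a ^^ k) 0)"
  by (induction k) (simp_all add: fixd_0[OF assms(1)] fixd_add[OF assms(1)] assms(2))

lemma equiv_gen:
  assumes b: "is_brace circ" and cd: "\<forall>y. circ d y = circ y d" and fa: "fixd circ a"
  shows "equivariant circ (\<lambda>x. sigma circ d x + a + zsmul n x)"
  unfolding equivariant_def
proof (intro allI ext)
  fix x z
  have "sigma circ x (sigma circ d z + a + zsmul n z)
     = sigma circ x (sigma circ d z) + a + zsmul n (sigma circ x z)"
    using fa unfolding fixd_def by (simp add: sig_add[OF b] sig_zsmul[OF b])
  also have "sigma circ x (sigma circ d z) = sigma circ d (sigma circ x z)"
    using sig_comp[OF b] cd by metis
  finally show "((\<lambda>x. sigma circ d x + a + zsmul n x) \<circ> sigma circ x) z =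
         (sigma circ x \<circ> (\<lambda>x. sigma circ d x + a + zsmul n x)) z" by simp
qed

lemma equiv_gen2:
  assumes b: "is_brace circ" and fa: "fixd circ a"
  shows "equivariant circ (\<lambda>x. a + zsmul n x)"
  unfolding equivariant_def
proof (intro allI ext)
  fix x z
  show "((\<lambda>x. a + zsmul n x) \<circ> sigma circ x) z = (sigma circ x \<circ> (\<lambda>x. a + zsmul n x)) z"
    using fa unfolding fixd_def by (simp add: sig_add[OF b] sig_zsmul[OF b])
qed

lemma pow_central: assumes b: "is_brace circ" and c: "\<forall>y. circ c y = circ y c"
  shows "circ (brace_pow circ c k) y = circ y (brace_pow circ c k)"
proof (induction k arbitrary: y)
  case 0 then show ?case by (simp add: pow0[OF b] lone[OF b] circ0[OF b])
next
  case (Suc k)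
  have "circ (brace_pow circ c (Suc k)) y = circ (brace_pow circ c k) (circ c y)"
    by (simp add: powS assoc[OF b])
  also have "\<dots> = circ (circ y c) (brace_pow circ c k)" using Suc c by metis
  also have "\<dots> = circ y (circ c (brace_pow circ c k))" by (simp add: assoc[OF b])
  also have "\<dots> = circ y (brace_pow circ c (Suc k))" using c by (simp add: powS)
  finally show ?case .
qed

lemma pow_two: assumes b: "is_brace circ" and c: "\<forall>y. circ c y = circ y c"
  and h: "\<forall>b. circ c b + circ c b = b + b + (c + c)"
  shows "circ (brace_pow circ c k) y + circ (brace_pow circ c k) y = y + y + (brace_pow circ c k + brace_pow circ c k)"
proof (induction k arbitrary: y)
  case 0 then show ?case by (simp add: pow0[OF b] lone[OF b])
next
  case (Suc k)
  have e: "circ (brace_pow circ c (Suc k)) y = circ (brace_pow circ c k) (circ c y)"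
    by (simp add: powS assoc[OF b])
  have "brace_pow circ c (Suc k) + brace_pow circ c (Suc k) = brace_pow circ c k + brace_pow circ c k + (c + c)"
    using h c by (simp add: powS)
  then show ?case using e Suc[of "circ c y"] h by (simp add: algebra_simps)
qed

lemma fixd_pow2: assumes b: "is_brace circ" and c: "\<forall>y. circ c y = circ y c"
  and h: "\<forall>b. circ c b + circ c b = b + b + (c + c)"
  shows "fixd circ (brace_pow circ c k + brace_pow circ c k)"
  unfolding fixd_def
proof
  fix y
  show "sigma circ y (brace_pow circ c k + brace_pow circ c k) = brace_pow circ c k + brace_pow circ c k"
    using bl[OF b, of y "brace_pow circ c k" "brace_pow circ c k"] pow_two[OF b c h, of k y] pow_central[OF b c, of k y]
    unfolding sigma_def by (simp add: algebra_simps)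
qed


theorem mainTheorem5:
  fixes circ :: "'a::ab_group_add \<Rightarrow> 'a \<Rightarrow> 'a" and c :: 'a
  assumes brace: "is_brace circ"
    and central: "\<forall>b. circ c b = circ b c"
  shows "(\<forall>n::int. equivariant circ (\<lambda>x. circ c x - c + zsmul n x))
    \<and> ((\<forall>b. zsmul 2 (circ c b) = zsmul 2 b + zsmul 2 c) \<longrightarrow>
        (\<forall>n::int. equivariant circ (\<lambda>x. circ c x + c + zsmul n x))
      \<and> (\<forall>m::nat. m \<ge> 1 \<longrightarrow> equivariant circ (\<lambda>x.
            circ (brace_pow circ c (2*m)) x + brace_pow circ c (2*m)
            + zsmul 2 (\<Sum>j\<in>{1..m-1}. brace_pow circ c (2*j))
            - zsmul 2 (\<Sum>j\<in>{1..m}. brace_pow circ c (2*j-1))))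
      \<and> (\<forall>m::nat. m \<ge> 1 \<longrightarrow> equivariant circ (\<lambda>x.
            circ (brace_pow circ c (2*m)) x - brace_pow circ c (2*m)
            - zsmul 2 (\<Sum>j\<in>{1..m-1}. brace_pow circ c (2*j))
            + zsmul 2 (\<Sum>j\<in>{1..m}. brace_pow circ c (2*j-1))))
      \<and> (\<forall>(m::nat) (n::int). m \<ge> 1 \<longrightarrow>
            equivariant circ (\<lambda>x. zsmul (2 * int m) c + zsmul (2 * int m + n) x)))"
proof -
  have b: "is_brace circ" by (rule brace)
  have eqv: "equivariant circ f" if "equivariant circ g" "\<And>x. f x = g x" for f g
    using that by (metis ext)
  have P1: "\<forall>n::int. equivariant circ (\<lambda>x. circ c x - c + zsmul n x)"
  proof
    fix n
    show "equivariant circ (\<lambda>x. circ c x - c + zsmul n x)"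
      by (rule eqv[OF equiv_gen[OF b central fixd_0[OF b], of n]]) (simp add: sigma_def)
  qed
  have c1: "brace_pow circ c 1 = c" using powS[of circ c 0] pow0[OF b] lone[OF b] by simp
  have P2: "(\<forall>n::int. equivariant circ (\<lambda>x. circ c x + c + zsmul n x))
      \<and> (\<forall>m::nat. m \<ge> 1 \<longrightarrow> equivariant circ (\<lambda>x.
            circ (brace_pow circ c (2*m)) x + brace_pow circ c (2*m)
            + zsmul 2 (\<Sum>j\<in>{1..m-1}. brace_pow circ c (2*j))
            - zsmul 2 (\<Sum>j\<in>{1..m}. brace_pow circ c (2*j-1))))
      \<and> (\<forall>m::nat. m \<ge> 1 \<longrightarrow> equivariant circ (\<lambda>x.
            circ (brace_pow circ c (2*m)) x - brace_pow circ c (2*m)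
            - zsmul 2 (\<Sum>j\<in>{1..m-1}. brace_pow circ c (2*j))
            + zsmul 2 (\<Sum>j\<in>{1..m}. brace_pow circ c (2*j-1))))
      \<and> (\<forall>(m::nat) (n::int). m \<ge> 1 \<longrightarrow>
            equivariant circ (\<lambda>x. zsmul (2 * int m) c + zsmul (2 * int m + n) x))"
    if H0: "\<forall>b. zsmul 2 (circ c b) = zsmul 2 b + zsmul 2 c"
  proof -
    have h: "\<forall>b. circ c b + circ c b = b + b + (c + c)" using H0 by (simp add: zsmul2)
    have fp: "fixd circ (brace_pow circ c k + brace_pow circ c k)" for k
      by (rule fixd_pow2[OF b central h])
    have fc: "fixd circ (c + c)" using fp[of 1] c1 by simp
    have zs: "zsmul 2 (\<Sum>j\<in>S. f j) = (\<Sum>j\<in>S. f j + f j)" for S and f :: "nat \<Rightarrow> 'a"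
      by (simp add: zsmul2 sum.distrib)
    have fS: "fixd circ (\<Sum>j\<in>S. brace_pow circ c (g j) + brace_pow circ c (g j))" for S and g :: "nat \<Rightarrow> nat"
      by (rule fixd_sum[OF b]) (rule fp)
    have cen: "\<forall>y. circ (brace_pow circ c k) y = circ y (brace_pow circ c k)" for k
      using pow_central[OF b central] by blast
    show ?thesis
    proof (intro conjI allI impI)
      fix n :: int
      show "equivariant circ (\<lambda>x. circ c x + c + zsmul n x)"
        by (rule eqv[OF equiv_gen[OF b central fc, of n]]) (simp add: sigma_def algebra_simps)
    next
      fix m :: nat
      let ?d = "brace_pow circ c (2*m)"
      let ?S1 = "\<Sum>j\<in>{1..m-1}. brace_pow circ c (2*j) + brace_pow circ c (2*j)"
      let ?S2 = "\<Sum>j\<in>{1..m}. brace_pow circ c (2*j-1) + brace_pow circ c (2*j-1)"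
      have fa: "fixd circ (?d + ?d + ?S1 - ?S2)"
        by (intro fixd_diff[OF b] fixd_add[OF b] fp fS)
      show "equivariant circ (\<lambda>x.
            circ (brace_pow circ c (2*m)) x + brace_pow circ c (2*m)
            + zsmul 2 (\<Sum>j\<in>{1..m-1}. brace_pow circ c (2*j))
            - zsmul 2 (\<Sum>j\<in>{1..m}. brace_pow circ c (2*j-1)))"
        by (rule eqv[OF equiv_gen[OF b cen[of "2*m"] fa, where n=0]]) (simp only: sigma_def zs zsmul0, simp add: algebra_simps)
    next
      fix m :: nat
      let ?d = "brace_pow circ c (2*m)"
      let ?S1 = "\<Sum>j\<in>{1..m-1}. brace_pow circ c (2*j) + brace_pow circ c (2*j)"
      let ?S2 = "\<Sum>j\<in>{1..m}. brace_pow circ c (2*j-1) + brace_pow circ c (2*j-1)"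
      have fa: "fixd circ (?S2 - ?S1)"
        by (intro fixd_diff[OF b] fS)
      show "equivariant circ (\<lambda>x.
            circ (brace_pow circ c (2*m)) x - brace_pow circ c (2*m)
            - zsmul 2 (\<Sum>j\<in>{1..m-1}. brace_pow circ c (2*j))
            + zsmul 2 (\<Sum>j\<in>{1..m}. brace_pow circ c (2*j-1)))"
        by (rule eqv[OF equiv_gen[OF b cen[of "2*m"] fa, where n=0]]) (simp only: sigma_def zs zsmul0, simp add: algebra_simps)
    next
      fix m :: nat and n :: int
      have fa: "fixd circ (zsmul (2 * int m) c)"
        unfolding zsmul_2m by (rule fixd_pow[OF b fc])
      show "equivariant circ (\<lambda>x. zsmul (2 * int m) c + zsmul (2 * int m + n) x)"
        by (rule equiv_gen2[OF b fa])
    qed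
  qed
  show ?thesis using P1 P2 by blast
qed

end
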